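(* For every integer $N\ge3$ and every integer $w$ with $\gcd(w,N)=1$, \[ \frac1{N^2}\sum_{h=1}^{N-1}\frac{\cot^2(\pi hw/N)}{h^2}>\frac1{6N^2}. \] *)

theory Defs
  imports Complex_Main
begin

end

theory Submission
  imports Defs "HOL-Analysis.Complex_Transcendental"
begin

lemma cot_shift: "cot (x + of_int k * pi) = cot x"
  by (simp add: cot_altdef)

lemma cot_red:
  fixes N h w k r :: int
  assumes "N > 0" "h * w = k * N + r"
  shows "cot (pi * of_int h * of_int w / of_int N) = cot (pi * of_int r / of_int N)"
proof -
  have "pi * of_int h * of_int w / of_int N = pi * (of_int (h*w)) / of_int N" by simp
  also have "\<dots> = pi * of_int r / of_int N + of_int k * pi"
    using assms by (simp add: field_simps)
  finally show ?thesis using cot_shift by simp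
qed

lemma inv_bound:
  fixes a b :: real
  assumes "a > 0" "b > 0"
  shows "1/a^2 + 1/b^2 \<ge> 8/(a+b)^2"
proof -
  have "1/a^2 + 1/b^2 \<ge> 2/(a*b)"
  proof -
    have e: "1/a^2 + 1/b^2 - 2/(a*b) = (1/a - 1/b)^2" using assms
      by (simp add: power2_eq_square field_simps)
    have "(1/a - 1/b)^2 \<ge> 0" by simp
    thus ?thesis using e by linarith
  qed
  moreover have "4*(a*b) \<le> (a+b)^2"
  proof -
    have "(a+b)^2 - 4*(a*b) = (a-b)^2" by (simp add: power2_eq_square algebra_simps)
    thus ?thesis using zero_le_power2[of "a-b"] by linarith
  qed
  hence "2/(a*b) \<ge> 8/(a+b)^2" using assms
    by (simp add: field_simps)
  ultimately show ?thesis by linarith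
qed

theorem lemma2:
  fixes N w :: int
  assumes "N \<ge> 3" and "gcd w N = 1"
  shows "(1 / (of_int N)^2) * (\<Sum>h=1..N-1. (cot (pi * of_int h * of_int w / of_int N))^2 / (of_int h)^2)
           > 1 / (6 * (of_int N)^2)"
proof -
  define f where "f = (\<lambda>h::int. (cot (pi * of_int h * of_int w / of_int N))^2 / (of_int h)^2)"
  obtain a b where ab: "a*w + b*N = 1"
    using assms(2) by (metis bezout_int gcd.commute mult.commute)
  define h0 where "h0 = a mod N"
  have Npos: "N > 0" using assms by simp
  have h0w: "h0 * w = (a div N * (-w) - b) * N + 1"
  proof -
    have "a = a div N * N + h0" unfolding h0_def by simp
    hence "(a div N * N + h0)*w + b*N = 1" using ab by simp
    thus ?thesis by algebra
  qed
  have h0ne: "h0 \<noteq> 0"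
  proof
    assume "h0 = 0"
    with h0w have "N dvd 1" by (metis add.left_neutral dvd_triv_right mult_zero_left dvd_add_right_iff)
    thus False using assms by auto
  qed
  have h0r: "0 \<le> h0" "h0 < N" unfolding h0_def using Npos by auto
  define h1 where "h1 = N - h0"
  have h1w: "h1 * w = (w - (a div N * (-w) - b)) * N + (-1)"
    unfolding h1_def using h0w by algebra
  have hne: "h0 \<noteq> h1"
  proof
    assume "h0 = h1"
    hence "N = 2*h0" unfolding h1_def by simp
    hence "2 = N * (w - (a div N * (-w) - b) * 2)" using h0w by algebra
    hence "N dvd 2" by (metis dvd_triv_left)
    hence "N \<le> 2" by (simp add: zdvd_imp_le)
    thus False using assms by simp
  qed
  define c where "c = (cot (pi / of_int N))^2"
  have f0: "f h0 = c / (of_int h0)^2"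
    unfolding f_def c_def using cot_red[OF Npos h0w] by simp
  have f1: "f h1 = c / (of_int h1)^2"
    unfolding f_def c_def using cot_red[OF Npos h1w] by simp
  have sub: "{h0, h1} \<subseteq> {1..N-1}" using h0r h0ne unfolding h1_def by auto
  have "f h0 + f h1 = sum f {h0,h1}" using hne by simp
  also have "\<dots> \<le> sum f {1..N-1}"
    by (rule sum_mono2) (use sub in \<open>auto simp: f_def\<close>)
  finally have S: "f h0 + f h1 \<le> sum f {1..N-1}" .
  define x where "x = pi / of_int N"
  have xpos: "x > 0" unfolding x_def using Npos by simp
  have xle: "x \<le> pi/3" unfolding x_def
  proof -
    have "real_of_int N \<ge> 3" using assms by simp
    thus "pi / real_of_int N \<le> pi/3" by (intro divide_left_mono) auto
  qed
  have cosx: "cos x \<ge> 1/2"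
  proof -
    have "cos (pi/3) \<le> cos x" using xpos xle by (intro cos_monotone_0_pi_le) auto
    thus ?thesis by (simp add: cos_60)
  qed
  have sinx: "0 < sin x" "sin x \<le> x"
    using xpos xle sin_gt_zero[of x] sin_x_le_x[of x] pi_gt3 by auto
  have "cot x \<ge> (1/2) / x"
  proof -
    have "(1/2)/x \<le> cos x / x" using cosx xpos by (intro divide_right_mono) auto
    also have "\<dots> \<le> cos x / sin x" using sinx cosx
      by (intro divide_left_mono) auto
    finally show ?thesis by (simp add: cot_def)
  qed
  hence "c \<ge> ((1/2)/x)^2" unfolding c_def x_def[symmetric] using xpos
    by (intro power_mono) auto
  hence cb: "c \<ge> (of_int N)^2 / (4*pi^2)" unfolding x_def using Npos
    by (simp add: power_divide field_simps)
  have hp: "real_of_int h0 > 0" "real_of_int h1 > 0" using h0r h0ne unfolding h1_def by auto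
  have "1/(real_of_int h0)^2 + 1/(of_int h1)^2 \<ge> 8/(of_int N)^2"
    using inv_bound[OF hp] unfolding h1_def by simp
  have "f h0 + f h1 = c * (1/(of_int h0)^2 + 1/(of_int h1)^2)"
    using f0 f1 by (simp add: field_simps)
  also have "\<dots> \<ge> ((of_int N)^2 / (4*pi^2)) * (8/(of_int N)^2)"
    using cb \<open>1/(real_of_int h0)^2 + 1/(of_int h1)^2 \<ge> 8/(of_int N)^2\<close>
    by (intro mult_mono) (auto simp: c_def)
  finally have "f h0 + f h1 \<ge> 2 / pi^2" using Npos by (simp add: field_simps)
  moreover have "2 / pi^2 > (1/6::real)"
  proof -
    have p: "pi \<le> 3.2" using pi_approx(2) by simp
    have "pi*pi \<le> 3.2*3.2" using p pi_gt_zero by (intro mult_mono) auto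
    hence "pi^2 < 12" unfolding power2_eq_square by linarith
    thus ?thesis by (simp add: field_simps)
  qed
  ultimately have "sum f {1..N-1} > 1/6" using S by linarith
  hence "(1 / (of_int N)^2) * sum f {1..N-1} > (1 / (of_int N)^2) * (1/6)"
    using Npos by (intro mult_strict_left_mono) auto
  thus ?thesis unfolding f_def by simp
qed

end
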